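(* Let $L\ge1$ and $q\in\{2,\dots,L\}$ be integers, $\delta\in(0,1)$, $k=\lceil L/\delta\rceil$, and $s,d\ge1$. Let $I$ be an $(s,d)$-decent instance of Min Weight Generalized Domination with Gaifman graph $G$ and minimum solution cost $\mathsf{OPT}$. Let $V_0,\dots,V_{k-1}\subseteq V(G)$ be such that $N_G[V_0],\dots,N_G[V_{k-1}]$ are pairwise disjoint, let $I_i=\mathsf{Clear}(I;V_i)$ with minimum solution cost $\mathsf{OPT}_i$, and let reals $p_i$ satisfy $(1-\delta\frac{q-1}{L})\mathsf{OPT}_i\le p_i\le\mathsf{OPT}_i$ for every $i$. Then $p=\max(p_0,\dots,p_{k-1})$ satisfies $(1-\delta\frac{q}{L})\mathsf{OPT}\le p\le\mathsf{OPT}$.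
   Context: An instance of Min Weight Generalized Domination consists of a loopless multigraph $G$ and for every vertex $u$: a finite domain $D_u$, $\mathsf{cost}_u\colon D_u\to\mathbb{R}_{\ge0}\cup\{+\infty\}$, and $\mathsf{supply}_u,\mathsf{demand}_u\colon D_u\to 2^{\delta(u)}$ ($\delta(u)$ = edges incident to $u$), with some $s_u\in D_u$ having $\mathsf{supply}_u(s_u)=\delta(u)$ and finite cost. A solution is $\phi$ with $\phi(u)\in D_u$ such that for every edge $e$ with endpoints $u,v$, $e\in\mathsf{demand}_u(\phi(u))\Rightarrow e\in\mathsf{supply}_v(\phi(v))$ and $e\in\mathsf{demand}_v(\phi(v))\Rightarrow e\in\mathsf{supply}_u(\phi(u))$; cost $\sum_u\mathsf{cost}_u(\phi(u))$. A vertex is $(s,d)$-meager if $|\delta(u)|\le s$ and $|D_u|\le d$; state-monotonous if for all ordered $x_1,x_2\in D_u$ there is $x\in D_u$ with $\mathsf{cost}_u(x)\le\mathsf{cost}_u(x_1)+\mathsf{cost}_u(x_2)$, $\mathsf{supply}_u(x)=\mathsf{supply}_u(x_1)\cup\mathsf{supply}_u(x_2)$, $\mathsf{demand}_u(x)\subseteq\mathsf{demand}_u(x_1)$; $(s,d)$-decent means all vertices are $(s,d)$-meager and state-monotonous. $N_G[A]$ is the closed neighborhood of $A$. $\mathsf{Clear}(I;A)$ is obtained by deleting all edges with both endpoints in $A$ (also from supply and demand sets) and then setting $\mathsf{demand}_u(x)=\emptyset$ for all $u\in A$, $x\in D_u$. *)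

theory Defs
  imports "HOL-Library.Extended_Real"
begin

text \<open>An instance of Min Weight Generalized Domination: a loopless multigraph
(vertex set, edge set, endpoint map with exactly two distinct endpoints per edge)
together with, for every vertex, a domain of states, a cost function into
nonnegative extended reals (possibly +infinity), and supplies/demands maps.\<close>

record ('v,'e,'s) gdinst =
  verts  :: "'v set"
  edges  :: "'e set"
  ends   :: "'e \<Rightarrow> 'v set"
  doms    :: "'v \<Rightarrow> 's set"
  cost   :: "'v \<Rightarrow> 's \<Rightarrow> ereal"
  supplies :: "'v \<Rightarrow> 's \<Rightarrow> 'e set"
  demands :: "'v \<Rightarrow> 's \<Rightarrow> 'e set"

definition inc_edges :: "('v,'e,'s) gdinst \<Rightarrow> 'v \<Rightarrow> 'e set" where
  "inc_edges I u = {e \<in> edges I. u \<in> ends I e}"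

definition wf_inst :: "('v,'e,'s) gdinst \<Rightarrow> bool" where
  "wf_inst I \<longleftrightarrow>
     finite (verts I) \<and> finite (edges I) \<and>
     (\<forall>e\<in>edges I. ends I e \<subseteq> verts I \<and> card (ends I e) = 2) \<and>
     (\<forall>u\<in>verts I. finite (doms I u) \<and>
        (\<forall>x\<in>doms I u. cost I u x \<ge> 0 \<and> supplies I u x \<subseteq> inc_edges I u
                      \<and> demands I u x \<subseteq> inc_edges I u) \<and>
        (\<exists>x\<in>doms I u. supplies I u x = inc_edges I u \<and> cost I u x < \<infinity>))"

definition is_solution :: "('v,'e,'s) gdinst \<Rightarrow> ('v \<Rightarrow> 's) \<Rightarrow> bool" where
  "is_solution I \<phi> \<longleftrightarrow>
     (\<forall>u\<in>verts I. \<phi> u \<in> doms I u) \<and>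
     (\<forall>e\<in>edges I. \<forall>u\<in>ends I e. \<forall>v\<in>ends I e. u \<noteq> v \<longrightarrow>
        (e \<in> demands I u (\<phi> u) \<longrightarrow> e \<in> supplies I v (\<phi> v)))"

definition sol_cost :: "('v,'e,'s) gdinst \<Rightarrow> ('v \<Rightarrow> 's) \<Rightarrow> ereal" where
  "sol_cost I \<phi> = (\<Sum>u\<in>verts I. cost I u (\<phi> u))"

text \<open>Minimum solution cost (the set of attained values is finite for well-formed
instances, so the infimum is a minimum).\<close>
definition OPT :: "('v,'e,'s) gdinst \<Rightarrow> ereal" where
  "OPT I = (INF \<phi> \<in> {\<phi>. is_solution I \<phi>}. sol_cost I \<phi>)"

definition meager :: "nat \<Rightarrow> nat \<Rightarrow> ('v,'e,'s) gdinst \<Rightarrow> 'v \<Rightarrow> bool" where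
  "meager s d I u \<longleftrightarrow> card (inc_edges I u) \<le> s \<and> card (doms I u) \<le> d"

definition state_monotonous :: "('v,'e,'s) gdinst \<Rightarrow> 'v \<Rightarrow> bool" where
  "state_monotonous I u \<longleftrightarrow>
     (\<forall>x1\<in>doms I u. \<forall>x2\<in>doms I u. \<exists>x\<in>doms I u.
        cost I u x \<le> cost I u x1 + cost I u x2 \<and>
        supplies I u x = supplies I u x1 \<union> supplies I u x2 \<and>
        demands I u x \<subseteq> demands I u x1)"

definition decent :: "nat \<Rightarrow> nat \<Rightarrow> ('v,'e,'s) gdinst \<Rightarrow> bool" where
  "decent s d I \<longleftrightarrow> (\<forall>u\<in>verts I. meager s d I u \<and> state_monotonous I u)"

definition closed_nbhd :: "('v,'e,'s) gdinst \<Rightarrow> 'v set \<Rightarrow> 'v set" where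
  "closed_nbhd I A = A \<union> {v \<in> verts I. \<exists>e\<in>edges I. \<exists>u\<in>A. u \<in> ends I e \<and> v \<in> ends I e}"

definition clear :: "('v,'e,'s) gdinst \<Rightarrow> 'v set \<Rightarrow> ('v,'e,'s) gdinst" where
  "clear I A =
     (let E' = {e \<in> edges I. \<not> ends I e \<subseteq> A} in
      I\<lparr> edges := E',
         supplies := (\<lambda>u x. supplies I u x \<inter> E'),
         demands := (\<lambda>u x. if u \<in> A then {} else demands I u x \<inter> E') \<rparr>)"

end

theory Submission imports Defs "HOL-Library.FuncSet" begin

lemma clear_simps:
  "verts (clear I A) = verts I" "doms (clear I A) = doms I" "cost (clear I A) = cost I"
  "ends (clear I A) = ends I" "edges (clear I A) = {e \<in> edges I. \<not> ends I e \<subseteq> A}"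
  "supplies (clear I A) u x = supplies I u x \<inter> {e \<in> edges I. \<not> ends I e \<subseteq> A}"
  "demands (clear I A) u x = (if u \<in> A then {} else demands I u x \<inter> {e \<in> edges I. \<not> ends I e \<subseteq> A})"
  by (simp_all add: clear_def Let_def)

lemma sol_clear: "is_solution I \<phi> \<Longrightarrow> is_solution (clear I A) \<phi>"
  unfolding is_solution_def clear_simps by auto

lemma sol_cost_clear: "sol_cost (clear I A) \<phi> = sol_cost I \<phi>"
  unfolding sol_cost_def clear_simps by simp

lemma opt_attained:
  assumes "finite (verts I)" "\<forall>u\<in>verts I. finite (doms I u)" "is_solution I \<phi>0"
  shows "\<exists>\<phi>. is_solution I \<phi> \<and> sol_cost I \<phi> = OPT I"
proof -
  let ?S = "{\<phi>. is_solution I \<phi>}"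
  have sub: "sol_cost I ` ?S \<subseteq> sol_cost I ` (PiE (verts I) (doms I))"
  proof
    fix c assume "c \<in> sol_cost I ` ?S"
    then obtain \<phi> where p: "is_solution I \<phi>" "c = sol_cost I \<phi>" by auto
    have "restrict \<phi> (verts I) \<in> PiE (verts I) (doms I)"
      using p(1) unfolding is_solution_def by auto
    moreover have "sol_cost I (restrict \<phi> (verts I)) = c"
      unfolding p(2) sol_cost_def by (intro sum.cong) auto
    ultimately show "c \<in> sol_cost I ` (PiE (verts I) (doms I))" by force
  qed
  have fin: "finite (sol_cost I ` ?S)"
    by (rule finite_subset[OF sub]) (use assms in \<open>auto intro!: finite_PiE\<close>)
  have ne: "sol_cost I ` ?S \<noteq> {}" using assms(3) by auto
  have "OPT I = Min (sol_cost I ` ?S)" unfolding OPT_def using cInf_eq_Min[OF fin ne] by simp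
  then have "OPT I \<in> sol_cost I ` ?S" using Min_in[OF fin ne] by simp
  then show ?thesis by auto
qed

lemma key:
  assumes wf: "wf_inst I" and dec: "decent s d I" and AV: "A \<subseteq> verts I"
    and phi: "is_solution I \<phi>" and psi: "is_solution (clear I A) \<psi>"
  shows "\<exists>\<phi>'. is_solution I \<phi>' \<and>
     sol_cost I \<phi>' \<le> sol_cost (clear I A) \<psi> + (\<Sum>u\<in>closed_nbhd I A. cost I u (\<phi> u))"
proof -
  let ?N = "closed_nbhd I A"
  define P1 where "P1 u x \<longleftrightarrow> x \<in> doms I u \<and> cost I u x \<le> cost I u (\<phi> u) + cost I u (\<psi> u) \<and>
     supplies I u x = supplies I u (\<phi> u) \<union> supplies I u (\<psi> u) \<and> demands I u x \<subseteq> demands I u (\<phi> u)" for u x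
  define P2 where "P2 u x \<longleftrightarrow> x \<in> doms I u \<and> cost I u x \<le> cost I u (\<psi> u) + cost I u (\<phi> u) \<and>
     supplies I u x = supplies I u (\<psi> u) \<union> supplies I u (\<phi> u) \<and> demands I u x \<subseteq> demands I u (\<psi> u)" for u x
  define \<phi>' where "\<phi>' u = (if u \<in> A then (SOME x. P1 u x) else if u \<in> ?N then (SOME x. P2 u x) else \<psi> u)" for u
  have phid: "\<phi> u \<in> doms I u" and psid: "\<psi> u \<in> doms I u" if "u \<in> verts I" for u
    using phi psi that unfolding is_solution_def clear_simps by auto
  have P1: "P1 u (SOME x. P1 u x)" if "u \<in> verts I" for u
  proof (rule someI_ex)
    show "\<exists>x. P1 u x" using dec that phid[OF that] psid[OF that]
      unfolding decent_def state_monotonous_def P1_def by blast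
  qed
  have P2: "P2 u (SOME x. P2 u x)" if "u \<in> verts I" for u
  proof (rule someI_ex)
    show "\<exists>x. P2 u x" using dec that phid[OF that] psid[OF that]
      unfolding decent_def state_monotonous_def P2_def by blast
  qed
  have AN: "A \<subseteq> ?N" unfolding closed_nbhd_def by auto
  have NV: "?N \<subseteq> verts I" using AV unfolding closed_nbhd_def by auto
  have supPsi: "supplies I u (\<psi> u) \<subseteq> supplies I u (\<phi>' u)" if "u \<in> verts I" for u
    using P1[OF that] P2[OF that] unfolding \<phi>'_def P1_def P2_def by auto
  have supPhi: "supplies I u (\<phi> u) \<subseteq> supplies I u (\<phi>' u)" if "u \<in> ?N" for u
    using P1 P2 that NV AN unfolding \<phi>'_def P1_def P2_def by auto
  have dem: "demands I u (\<phi>' u) \<subseteq> demands I u (\<psi> u)" if "u \<in> verts I" "u \<notin> A" for u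
    using P2[OF that(1)] that unfolding \<phi>'_def P2_def by auto
  have demA: "demands I u (\<phi>' u) \<subseteq> demands I u (\<phi> u)" if "u \<in> A" for u
    using P1 that AV unfolding \<phi>'_def P1_def by auto
  have costb: "cost I u (\<phi>' u) \<le> cost I u (\<psi> u) + (if u \<in> ?N then cost I u (\<phi> u) else 0)"
    if "u \<in> verts I" for u
    using P1[OF that] P2[OF that] AN unfolding \<phi>'_def P1_def P2_def by (auto simp: add.commute)
  have sol: "is_solution I \<phi>'"
    unfolding is_solution_def
  proof (intro conjI ballI impI)
    fix u assume u: "u \<in> verts I"
    show "\<phi>' u \<in> doms I u" using P1[OF u] P2[OF u] psid[OF u] unfolding \<phi>'_def P1_def P2_def by auto
  next
    fix e u v assume e: "e \<in> edges I" and uv: "u \<in> ends I e" "v \<in> ends I e" "u \<noteq> v"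
      and d: "e \<in> demands I u (\<phi>' u)"
    have ev: "ends I e \<subseteq> verts I" using wf e unfolding wf_inst_def by auto
    show "e \<in> supplies I v (\<phi>' v)"
    proof (cases "u \<in> A")
      case True
      then have "e \<in> demands I u (\<phi> u)" using demA d by auto
      then have "e \<in> supplies I v (\<phi> v)" using phi e uv unfolding is_solution_def by auto
      moreover have "v \<in> ?N" using True e uv ev unfolding closed_nbhd_def by auto
      ultimately show ?thesis using supPhi by auto
    next
      case False
      have ee: "e \<in> edges (clear I A)" using False e uv unfolding clear_simps by auto
      have "e \<in> demands (clear I A) u (\<psi> u)"
        using dem[OF _ False] d ev uv e False unfolding clear_simps by auto
      then have "e \<in> supplies (clear I A) v (\<psi> v)"
        using psi ee uv unfolding is_solution_def clear_simps(4) by blast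
      then have "e \<in> supplies I v (\<psi> v)" unfolding clear_simps by auto
      then show ?thesis using supPsi ev uv by auto
    qed
  qed
  have fin: "finite (verts I)" using wf unfolding wf_inst_def by auto
  have "sol_cost I \<phi>' \<le> (\<Sum>u\<in>verts I. cost I u (\<psi> u) + (if u \<in> ?N then cost I u (\<phi> u) else 0))"
    unfolding sol_cost_def by (rule sum_mono) (rule costb)
  also have "\<dots> = sol_cost (clear I A) \<psi> + (\<Sum>u\<in>verts I. (if u \<in> ?N then cost I u (\<phi> u) else 0))"
    unfolding sum.distrib sol_cost_def clear_simps ..
  also have "(\<Sum>u\<in>verts I. (if u \<in> ?N then cost I u (\<phi> u) else 0)) = (\<Sum>u\<in>?N. cost I u (\<phi> u))"
    using sum.inter_restrict[OF fin, of "\<lambda>u. cost I u (\<phi> u)" ?N] NV by (simp add: Int_absorb1)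
  finally show ?thesis using sol by blast
qed

theorem lemma4p10:
  fixes I :: "('v,'e,'s) gdinst" and L q s d :: nat and \<delta> :: real
    and Vs :: "nat \<Rightarrow> 'v set" and p :: "nat \<Rightarrow> real" and k :: nat
  assumes "L \<ge> 1" and "2 \<le> q" and "q \<le> L"
    and "0 < \<delta>" and "\<delta> < 1"
    and k_def: "k = nat \<lceil>real L / \<delta>\<rceil>"
    and "s \<ge> 1" and "d \<ge> 1"
    and "wf_inst I" and "decent s d I"
    and "\<forall>i<k. Vs i \<subseteq> verts I"
    and "\<forall>i<k. \<forall>j<k. i \<noteq> j \<longrightarrow> closed_nbhd I (Vs i) \<inter> closed_nbhd I (Vs j) = {}"
    and "\<forall>i<k. ereal (1 - \<delta> * (real q - 1) / real L) * OPT (clear I (Vs i)) \<le> ereal (p i)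
              \<and> ereal (p i) \<le> OPT (clear I (Vs i))"
  shows "ereal (1 - \<delta> * real q / real L) * OPT I \<le> ereal (Max (p ` {..<k}))
         \<and> ereal (Max (p ` {..<k})) \<le> OPT I"
proof -
  note wf = assms(9) and dec = assms(10) and VV = assms(11) and disj = assms(12) and pb = assms(13)
  have fin: "finite (verts I)" and find: "\<forall>u\<in>verts I. finite (doms I u)"
    using wf unfolding wf_inst_def by auto
  define S0 where "S0 u x \<longleftrightarrow> x \<in> doms I u \<and> supplies I u x = inc_edges I u \<and> cost I u x < \<infinity>" for u x
  define \<phi>s where "\<phi>s u = (SOME x. S0 u x)" for u
  have S0: "S0 u (\<phi>s u)" if "u \<in> verts I" for u
    unfolding \<phi>s_def by (rule someI_ex) (use wf that in \<open>auto simp: wf_inst_def S0_def\<close>)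
  have sols: "is_solution I \<phi>s"
    unfolding is_solution_def
  proof (intro conjI ballI impI)
    fix u assume "u \<in> verts I" then show "\<phi>s u \<in> doms I u" using S0 unfolding S0_def by auto
  next
    fix e u v assume e: "e \<in> edges I" and uv: "u \<in> ends I e" "v \<in> ends I e" "u \<noteq> v"
    have "v \<in> verts I" using wf e uv unfolding wf_inst_def by auto
    then show "e \<in> supplies I v (\<phi>s v)" using S0 e uv unfolding S0_def inc_edges_def by auto
  qed
  have "sol_cost I \<phi>s \<noteq> \<infinity>"
    unfolding sol_cost_def sum_Pinfty using S0 unfolding S0_def by auto
  obtain \<phi> where phi: "is_solution I \<phi>" and phiopt: "sol_cost I \<phi> = OPT I"
    using opt_attained[OF fin find sols] by blast
  have "OPT I \<le> sol_cost I \<phi>s" unfolding OPT_def using sols by (auto intro: INF_lower)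
  have cnn: "cost I u (\<phi> u) \<ge> 0" if "u \<in> verts I" for u
    using wf phi that unfolding wf_inst_def is_solution_def by auto
  have cfin: "cost I u (\<phi> u) \<noteq> \<infinity>" if "u \<in> verts I" for u
  proof
    assume "cost I u (\<phi> u) = \<infinity>"
    then have "sol_cost I \<phi> = \<infinity>" unfolding sol_cost_def sum_Pinfty using fin that by auto
    then show False using \<open>OPT I \<le> sol_cost I \<phi>s\<close> \<open>sol_cost I \<phi>s \<noteq> \<infinity>\<close> phiopt by simp
  qed
  define rc where "rc u = real_of_ereal (cost I u (\<phi> u))" for u
  have rc: "ereal (rc u) = cost I u (\<phi> u)" "rc u \<ge> 0" if "u \<in> verts I" for u
    using cnn[OF that] cfin[OF that] unfolding rc_def
    by (cases "cost I u (\<phi> u)"; auto)+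
  define Ob where "Ob = (\<Sum>u\<in>verts I. rc u)"
  have OPTe: "OPT I = ereal Ob"
    unfolding Ob_def phiopt[symmetric] sol_cost_def sum_ereal[symmetric] using rc by (auto intro: sum.cong)
  have O0: "Ob \<ge> 0" unfolding Ob_def using rc by (auto intro: sum_nonneg)
  define N where "N i = closed_nbhd I (Vs i)" for i
  define c where "c i = (\<Sum>u\<in>N i. rc u)" for i
  have NV: "N i \<subseteq> verts I" if "i < k" for i
    using VV that unfolding N_def closed_nbhd_def by auto
  have ci: "(\<Sum>u\<in>N i. cost I u (\<phi> u)) = ereal (c i)" if "i < k" for i
  proof -
    have "ereal (c i) = (\<Sum>u\<in>N i. ereal (rc u))" by (simp add: c_def)
    also have "\<dots> = (\<Sum>u\<in>N i. cost I u (\<phi> u))"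
      by (rule sum.cong) (use rc NV[OF that] in auto)
    finally show ?thesis by simp
  qed
  have c0: "c i \<ge> 0" if "i < k" for i
    unfolding c_def using rc NV[OF that] by (auto intro!: sum_nonneg)
  define Oi where "Oi i = real_of_ereal (OPT (clear I (Vs i)))" for i
  have Oi: "OPT (clear I (Vs i)) = ereal (Oi i)" "Ob \<le> Oi i + c i" "Oi i \<le> Ob" if ik: "i < k" for i
  proof -
    have fin': "finite (verts (clear I (Vs i)))" "\<forall>u\<in>verts (clear I (Vs i)). finite (doms (clear I (Vs i)) u)"
      using fin find unfolding clear_simps by auto
    obtain \<psi> where psi: "is_solution (clear I (Vs i)) \<psi>" and psiopt: "sol_cost (clear I (Vs i)) \<psi> = OPT (clear I (Vs i))"
      using opt_attained[OF fin' sol_clear[OF phi]] by blast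
    have le: "OPT (clear I (Vs i)) \<le> OPT I"
    proof -
      have "OPT (clear I (Vs i)) \<le> sol_cost (clear I (Vs i)) \<phi>"
        unfolding OPT_def using sol_clear[OF phi] by (auto intro: INF_lower)
      then show ?thesis using sol_cost_clear phiopt by metis
    qed
    have ge: "OPT (clear I (Vs i)) \<ge> 0"
      unfolding psiopt[symmetric] sol_cost_def clear_simps
      using psi wf unfolding is_solution_def clear_simps wf_inst_def by (auto intro!: sum_nonneg)
    show e: "OPT (clear I (Vs i)) = ereal (Oi i)"
      unfolding Oi_def using le ge OPTe by (cases "OPT (clear I (Vs i))") auto
    show "Oi i \<le> Ob" using le e OPTe by simp
    obtain \<phi>' where "is_solution I \<phi>'" and "sol_cost I \<phi>' \<le> sol_cost (clear I (Vs i)) \<psi> + (\<Sum>u\<in>N i. cost I u (\<phi> u))"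
      using key[OF wf dec _ phi psi] VV ik unfolding N_def by blast
    moreover have "OPT I \<le> sol_cost I \<phi>'" unfolding OPT_def using \<open>is_solution I \<phi>'\<close> by (auto intro: INF_lower)
    ultimately have "OPT I \<le> ereal (Oi i) + ereal (c i)" using psiopt e ci[OF ik] by simp
    then show "Ob \<le> Oi i + c i" using OPTe by simp
  qed
  have sumc: "(\<Sum>i<k. c i) \<le> Ob"
  proof -
    have "(\<Sum>i<k. c i) = (\<Sum>u\<in>(\<Union>i\<in>{..<k}. N i). rc u)"
      unfolding c_def
    proof (rule sum.UNION_disjoint[symmetric])
      show "finite {..<k}" by simp
      show "\<forall>i\<in>{..<k}. finite (N i)" using NV fin by (auto intro: finite_subset)
      show "\<forall>i\<in>{..<k}. \<forall>j\<in>{..<k}. i \<noteq> j \<longrightarrow> N i \<inter> N j = {}" using disj unfolding N_def by auto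
    qed
    also have "\<dots> \<le> Ob" unfolding Ob_def
      by (rule sum_mono2) (use fin NV rc in auto)
    finally show ?thesis .
  qed
  have Lpos: "real L > 0" using assms(1) by simp
  have kge: "real k \<ge> real L / \<delta>" unfolding k_def
  proof -
    have x0: "real L / \<delta> > 0" using Lpos assms(4) by simp
    have "real_of_int \<lceil>real L / \<delta>\<rceil> \<ge> real L / \<delta>" by (rule le_of_int_ceiling)
    moreover have "\<lceil>real L / \<delta>\<rceil> \<ge> 0" using x0 by simp
    ultimately show "real (nat \<lceil>real L / \<delta>\<rceil>) \<ge> real L / \<delta>" by simp
  qed
  have kpos: "k \<ge> 1"
  proof -
    have "real L / \<delta> > 0" using Lpos assms(4) by simp
    then show ?thesis using kge by linarith
  qed
  obtain i where i: "i < k" "c i \<le> Ob / real k"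
  proof (rule ccontr)
    assume "\<not> thesis"
    with that have "\<forall>i<k. c i > Ob / real k" by force
    then have "(\<Sum>i<k. Ob / real k) < (\<Sum>i<k. c i)"
      using kpos by (intro sum_strict_mono) (auto simp: lessThan_empty_iff)
    then show False using sumc kpos by simp
  qed
  have ub: "\<forall>j<k. p j \<le> Ob" using pb Oi by (metis ereal_less_eq(3) order.trans)
  have finp: "finite (p ` {..<k})" and nep: "p ` {..<k} \<noteq> {}" using kpos by (auto simp: lessThan_empty_iff)
  have maxub: "Max (p ` {..<k}) \<le> Ob"
    using Max_in[OF finp nep] ub by auto
  have pi_le: "p i \<le> Max (p ` {..<k})" using i(1) finp by (auto intro: Max_ge)
  define a where "a = \<delta> * (real q - 1) / real L"
  define b where "b = \<delta> / real L"
  have a1: "1 - a \<ge> 0"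
  proof -
    have "\<delta> * (real q - 1) \<le> 1 * (real q - 1)" using assms(2,5) by (intro mult_right_mono) auto
    also have "\<dots> \<le> real L" using assms(3) by simp
    finally have "\<delta> * (real q - 1) / real L \<le> 1" using Lpos by (simp add: divide_le_eq)
    then show ?thesis unfolding a_def by simp
  qed
  have b0: "b \<ge> 0" "a \<ge> 0" unfolding a_def b_def using assms(2,4) Lpos by auto
  have pia: "(1 - a) * Oi i \<le> p i" using pb i(1) Oi(1)[OF i(1)] unfolding a_def by auto
  have "Ob / real k \<le> Ob * b"
  proof -
    have "1 / real k \<le> b" unfolding b_def using kge assms(4) Lpos
    proof -
      have kp: "real k > 0" using kpos by simp
      have "real L \<le> real k * \<delta>" using kge assms(4) by (simp add: divide_le_eq)
      then show "1 / real k \<le> \<delta> / real L" using kp Lpos by (simp add: field_simps)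
    qed
    then show ?thesis using O0 by (metis divide_inverse inverse_eq_divide mult_left_mono)
  qed
  then have "Oi i \<ge> Ob - Ob * b" using Oi(2)[OF i(1)] i(2) by linarith
  then have "(1 - a) * Oi i \<ge> (1 - a) * (Ob - Ob * b)" using a1 by (intro mult_left_mono) auto
  moreover have "(1 - a) * (Ob - Ob * b) \<ge> (1 - \<delta> * real q / real L) * Ob"
  proof -
    have "a + b = \<delta> * real q / real L" unfolding a_def b_def using Lpos by (simp add: field_simps)
    moreover have "a * b * Ob \<ge> 0" using b0 O0 by simp
    moreover have "(1 - a) * (Ob - Ob * b) - (1 - (a + b)) * Ob = a * b * Ob" by (simp add: algebra_simps)
    moreover have "(1 - \<delta> * real q / real L) * Ob = (1 - (a + b)) * Ob" using calculation(1) by simp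
    ultimately show ?thesis by linarith
  qed
  ultimately have "(1 - \<delta> * real q / real L) * Ob \<le> Max (p ` {..<k})" using pia pi_le by linarith
  then show ?thesis using maxub OPTe by simp
qed

end
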